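(* Let $\Omega\subset\mathbb{R}^N$ be a bounded open connected set, $h\in C(\Omega)$, and $\Theta(x):=\{(r,A)\in\mathbb{R}\times\mathcal{S}(N): G(A)\ge h(x)\}$, where $G(A):=\sum_{i=1}^N\arctan(\lambda_i(A))$. Suppose there exist $k\in\{1,\dots,N-1\}$ and a sequence $(x_n)_{n\in\mathbb N}\subset\Omega$ converging to $x_0\in\Omega$ such that $h(x_0)=\theta_k:=(N-2k)\frac{\pi}{2}$ and either $h(x_n)>\theta_k$ for every $n$, or $h(x_n)<\theta_k$ for every $n$. Then $\Theta$ is not Hausdorff continuous on $\Omega$.
   Context: $\mathcal{S}(N)$: real symmetric $N\times N$ matrices; $\lambda_1(A)\le\dots\le\lambda_N(A)$ its eigenvalues. On $\mathbb{R}\times\mathcal{S}(N)$ use the norm $\|(r,A)\|=\max\{|r|,\max_i|\lambda_i(A)|\}$ and the Hausdorff distance $d_{\mathcal H}(\Phi,\Psi)=\inf\{\varepsilon>0:\Phi\subset N_\varepsilon(\Psi),\Psi\subset N_\varepsilon(\Phi)\}\in[0,\infty]$ on closed sets. $\Theta$ is Hausdorff continuous on $\Omega$ if for all $x\in\Omega$, $\eta>0$ there is $\delta>0$ with $d_{\mathcal H}(\Theta(x),\Theta(y))<\eta$ whenever $y\in\Omega$, $|x-y|<\delta$. *)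

theory Defs
  imports "HOL-Analysis.Analysis" "HOL-Computational_Algebra.Polynomial" "HOL-Library.Multiset"
begin

definition symmetric_mat :: "real^'n^'n \<Rightarrow> bool" where
  "symmetric_mat A \<longleftrightarrow> transpose A = A"

definition charpoly :: "real^'n^'n \<Rightarrow> real poly" where
  "charpoly A = det (\<chi> i j. (if i = j then [:0, 1:] else 0) - [:A $ i $ j:])"

definition eigvals_mset :: "real^'n^'n \<Rightarrow> real multiset" where
  "eigvals_mset A = Abs_multiset (\<lambda>a. order a (charpoly A))"

text \<open>The eigenvalues in increasing order: lambda_1(A) <= ... <= lambda_N(A)
  (list index 0 corresponds to lambda_1).\<close>
definition eigvals :: "real^'n^'n \<Rightarrow> real list" where
  "eigvals A = sorted_list_of_multiset (eigvals_mset A)"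

definition Gfun :: "real^'n^'n \<Rightarrow> real" where
  "Gfun A = (\<Sum>i<CARD('n). arctan (eigvals A ! i))"

definition pnorm :: "real \<times> (real^'n^'n) \<Rightarrow> real" where
  "pnorm p = max \<bar>fst p\<bar> (Max {\<bar>eigvals (snd p) ! i\<bar> | i. i < CARD('n)})"

definition nbhd :: "real \<Rightarrow> (real \<times> (real^'n^'n)) set \<Rightarrow> (real \<times> (real^'n^'n)) set" where
  "nbhd \<epsilon> \<Psi> = {p. \<exists>q\<in>\<Psi>. pnorm (p - q) < \<epsilon>}"

text \<open>Hausdorff distance, valued in [0, infinity] (Inf of the empty set is infinity).\<close>
definition hdist :: "(real \<times> (real^'n^'n)) set \<Rightarrow> (real \<times> (real^'n^'n)) set \<Rightarrow> ereal" where
  "hdist \<Phi> \<Psi> = Inf {ereal \<epsilon> | \<epsilon>. \<epsilon> > 0 \<and> \<Phi> \<subseteq> nbhd \<epsilon> \<Psi> \<and> \<Psi> \<subseteq> nbhd \<epsilon> \<Phi>}"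

definition hausdorff_continuous_on ::
  "(real^'n) set \<Rightarrow> (real^'n \<Rightarrow> (real \<times> (real^'n^'n)) set) \<Rightarrow> bool" where
  "hausdorff_continuous_on \<Omega> \<Theta> \<longleftrightarrow>
     (\<forall>x\<in>\<Omega>. \<forall>\<eta>>0. \<exists>\<delta>>0. \<forall>y\<in>\<Omega>. norm (x - y) < \<delta> \<longrightarrow> hdist (\<Theta> x) (\<Theta> y) < ereal \<eta>)"

definition Theta :: "(real^'n \<Rightarrow> real) \<Rightarrow> real^'n \<Rightarrow> (real \<times> (real^'n^'n)) set" where
  "Theta h x = {(r, A). symmetric_mat A \<and> Gfun A \<ge> h x}"

end

theory Submission
  imports Defs
begin

lemma sym_inner:
  fixes M :: "real^'n^'n"
  assumes "symmetric_mat M"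
  shows "(M *v x) \<bullet> y = x \<bullet> (M *v y)"
proof -
  have "(M *v x) \<bullet> y = (x v* transpose M) \<bullet> y" by simp
  also have "\<dots> = x \<bullet> (transpose M *v y)" by (rule dot_lmul_matrix)
  finally show ?thesis using assms unfolding symmetric_mat_def by simp
qed

lemma max_eigen:
  fixes M :: "real^'n^'n"
  assumes sym: "symmetric_mat M" and S: "subspace S" and inv: "\<And>x. x \<in> S \<Longrightarrow> M *v x \<in> S"
    and ne: "S \<noteq> {0}"
  shows "\<exists>v\<in>S. norm v = 1 \<and> M *v v = (v \<bullet> (M *v v)) *\<^sub>R v"
proof -
  define K where "K = S \<inter> sphere 0 1"
  have cK: "compact K" unfolding K_def
    by (simp add: S closed_Int_compact closed_subspace)
  obtain x where x: "x \<in> S" "x \<noteq> 0" using ne S subspace_0 by blast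
  have "x /\<^sub>R norm x \<in> K" unfolding K_def using x S
    by (simp add: subspace_scale)
  hence Kne: "K \<noteq> {}" by blast
  have cont: "continuous_on K (\<lambda>x. x \<bullet> (M *v x))"
    by (intro continuous_intros continuous_on_id linear_continuous_on) (simp add: matrix_vector_mul_linear linear_linear)
  obtain v where v: "v \<in> K" and vmax: "\<And>y. y \<in> K \<Longrightarrow> y \<bullet> (M *v y) \<le> v \<bullet> (M *v v)"
    using continuous_attains_sup[OF cK Kne cont] by blast
  define \<mu> where "\<mu> = v \<bullet> (M *v v)"
  have vS: "v \<in> S" and nv: "norm v = 1" using v unfolding K_def by auto
  have quad: "y \<bullet> (M *v y) \<le> \<mu> * (norm y)^2" if y: "y \<in> S" for y
  proof (cases "y = 0")
    case True then show ?thesis by simp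
  next
    case False
    have "y /\<^sub>R norm y \<in> K" unfolding K_def using y False S by (simp add: subspace_scale)
    hence "(y /\<^sub>R norm y) \<bullet> (M *v (y /\<^sub>R norm y)) \<le> \<mu>" using vmax \<mu>_def by blast
    hence "(y \<bullet> (M *v y)) / (norm y)^2 \<le> \<mu>"
      by (simp add: matrix_vector_mult_scaleR power2_eq_square divide_simps)
    thus ?thesis using False by (simp add: divide_simps mult.commute)
  qed
  define r where "r = M *v v - \<mu> *\<^sub>R v"
  have rS: "r \<in> S" unfolding r_def using S vS inv by (simp add: subspace_diff subspace_scale)
  have vv: "v \<bullet> v = 1" using nv by (simp add: dot_square_norm)
  have rv: "r \<bullet> v = 0" unfolding r_def \<mu>_def using vv
    by (simp add: inner_diff_left inner_diff_right inner_commute)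
  have rMv: "r \<bullet> (M *v v) = (norm r)^2"
  proof -
    have "M *v v = r + \<mu> *\<^sub>R v" unfolding r_def by simp
    hence "r \<bullet> (M *v v) = r \<bullet> r + \<mu> * (r \<bullet> v)" by (simp add: inner_add_right)
    thus ?thesis using rv by (simp add: dot_square_norm)
  qed
  have vMr: "v \<bullet> (M *v r) = (norm r)^2"
    using sym_inner[OF sym, of v r] rMv by (simp add: inner_commute)
  define q where "q = r \<bullet> (M *v r)"
  have ineq: "2 * t * (norm r)^2 \<le> t^2 * (\<mu> * (norm r)^2 - q)" for t :: real
  proof -
    have "v + t *\<^sub>R r \<in> S" using S vS rS by (simp add: subspace_add subspace_scale)
    from quad[OF this]
    have "(v + t *\<^sub>R r) \<bullet> (M *v (v + t *\<^sub>R r)) \<le> \<mu> * (norm (v + t *\<^sub>R r))^2" .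
    moreover have "(v + t *\<^sub>R r) \<bullet> (M *v (v + t *\<^sub>R r)) = \<mu> + 2 * t * (norm r)^2 + t^2 * q"
      using vMr rMv unfolding \<mu>_def q_def
      by (simp add: matrix_vector_right_distrib matrix_vector_mult_scaleR inner_add_left inner_add_right power2_eq_square algebra_simps)
    moreover have "(norm (v + t *\<^sub>R r))^2 = 1 + t^2 * (norm r)^2"
      using vv rv unfolding dot_square_norm[symmetric]
      by (simp add: inner_add_left inner_add_right inner_commute power2_eq_square algebra_simps)
    ultimately show ?thesis by (simp add: algebra_simps)
  qed
  have "r = 0"
  proof (rule ccontr)
    assume "r \<noteq> 0"
    define R where "R = (norm r)^2"
    define C where "C = \<mu> * R - q"
    have R: "R > 0" using \<open>r \<noteq> 0\<close> R_def by simp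
    define t where "t = R / (\<bar>C\<bar> + 1)"
    have t: "t > 0" using R t_def by simp
    have "2 * t * R \<le> t^2 * C" using ineq[of t] R_def C_def by simp
    hence "2 * R \<le> t * C" using t by (simp add: power2_eq_square)
    also have "t * C \<le> t * \<bar>C\<bar>" using t by (simp add: mult_left_mono)
    also have "t * \<bar>C\<bar> < R" unfolding t_def using R
      by (simp add: divide_simps)
    finally show False using R by simp
  qed
  thus ?thesis using vS nv unfolding r_def \<mu>_def by auto
qed

definition eigbasis :: "real^'n^'n \<Rightarrow> (real^'n) set \<Rightarrow> bool" where
  "eigbasis M U \<longleftrightarrow> pairwise orthogonal U \<and> (\<forall>u\<in>U. norm u = 1 \<and> M *v u = (u \<bullet> (M *v u)) *\<^sub>R u) \<and> span U = UNIV"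

lemma eig_subspace:
  fixes M :: "real^'n^'n"
  assumes sym: "symmetric_mat M"
  shows "subspace S \<Longrightarrow> (\<And>x. x \<in> S \<Longrightarrow> M *v x \<in> S) \<Longrightarrow>
    \<exists>U. U \<subseteq> S \<and> pairwise orthogonal U \<and> (\<forall>u\<in>U. norm u = 1 \<and> M *v u = (u \<bullet> (M *v u)) *\<^sub>R u) \<and> span U = S"
proof (induction "dim S" arbitrary: S rule: less_induct)
  case less
  show ?case
  proof (cases "S = {0}")
    case True
    then show ?thesis by (intro exI[of _ "{}"]) auto
  next
    case False
    obtain v where vS: "v \<in> S" and nv: "norm v = 1" and ev: "M *v v = (v \<bullet> (M *v v)) *\<^sub>R v"
      using max_eigen[OF sym less.prems(1) less.prems(2) False] by blast
    define \<mu> where "\<mu> = v \<bullet> (M *v v)"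
    have vv: "v \<bullet> v = 1" using nv by (simp add: dot_square_norm)
    define S' where "S' = S \<inter> {x. v \<bullet> x = 0}"
    have sub': "subspace S'" unfolding S'_def
      using subspace_inter[OF less.prems(1) subspace_hyperplane] by simp
    have inv': "M *v x \<in> S'" if "x \<in> S'" for x
    proof -
      have "v \<bullet> (M *v x) = (M *v v) \<bullet> x" using sym_inner[OF sym] by simp
      also have "\<dots> = \<mu> * (v \<bullet> x)" using ev \<mu>_def by (metis inner_scaleR_left)
      finally show ?thesis using that less.prems(2) unfolding S'_def by auto
    qed
    have "S' \<subset> S" using vS vv unfolding S'_def by (metis (mono_tags, lifting) Int_iff inf_le1 mem_Collect_eq psubsetI zero_neq_one)
    hence "span S' \<subset> span S" using sub' less.prems(1) by (metis span_eq_iff)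
    hence "dim S' < dim S" by (rule dim_psubset)
    from less.hyps[OF this sub' inv'] obtain U' where U': "U' \<subseteq> S'" "pairwise orthogonal U'"
      "\<forall>u\<in>U'. norm u = 1 \<and> M *v u = (u \<bullet> (M *v u)) *\<^sub>R u" "span U' = S'" by blast
    have vU': "v \<notin> U'" using U'(1) vv unfolding S'_def by auto
    have orth: "orthogonal v u" "orthogonal u v" if "u \<in> U'" for u
      using that U'(1) unfolding S'_def orthogonal_def by (auto simp: inner_commute)
    show ?thesis
    proof (intro exI[of _ "insert v U'"] conjI)
      show "insert v U' \<subseteq> S" using vS U'(1) unfolding S'_def by auto
      show "pairwise orthogonal (insert v U')"
        using U'(2) orth by (auto simp: pairwise_insert)
      show "\<forall>u\<in>insert v U'. norm u = 1 \<and> M *v u = (u \<bullet> (M *v u)) *\<^sub>R u"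
        using U'(3) nv ev by auto
      show "span (insert v U') = S"
      proof
        show "span (insert v U') \<subseteq> S"
          using vS U'(1) less.prems(1) unfolding S'_def by (metis (no_types, lifting) insert_subset le_inf_iff span_minimal)
        show "S \<subseteq> span (insert v U')"
        proof
          fix x assume x: "x \<in> S"
          have "x - (v \<bullet> x) *\<^sub>R v \<in> S'" unfolding S'_def using x vS vv less.prems(1)
            by (simp add: subspace_diff subspace_scale inner_diff_right)
          hence "x - (v \<bullet> x) *\<^sub>R v \<in> span (insert v U')" using U'(4)
            by (metis span_mono subset_insertI subsetD)
          moreover have "(v \<bullet> x) *\<^sub>R v \<in> span (insert v U')"
            by (simp add: span_base span_scale)
          ultimately have "(x - (v \<bullet> x) *\<^sub>R v) + (v \<bullet> x) *\<^sub>R v \<in> span (insert v U')"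
            by (rule span_add)
          thus "x \<in> span (insert v U')" by simp
        qed
      qed
    qed
  qed
qed

lemma eigbasis_exists:
  fixes M :: "real^'n^'n"
  assumes "symmetric_mat M"
  shows "\<exists>U. eigbasis M U"
  using eig_subspace[OF assms, of UNIV] unfolding eigbasis_def by auto

lemma eigbasis_basic:
  fixes M :: "real^'n^'n"
  assumes "eigbasis M U"
  shows "independent U" "finite U" "card U = CARD('n)"
proof -
  have "0 \<notin> U" using assms unfolding eigbasis_def by force
  thus ind: "independent U" using assms unfolding eigbasis_def
    by (intro pairwise_orthogonal_independent) auto
  thus "finite U" by (rule independent_imp_finite)
  have "card U = dim (span U)" using dim_span_eq_card_independent[OF ind] by simp
  also have "\<dots> = dim (UNIV :: (real^'n) set)" using assms unfolding eigbasis_def by simp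
  also have "\<dots> = CARD('n)" by simp
  finally show "card U = CARD('n)" .
qed

lemma eigbasis_orth:
  assumes "eigbasis M U" "u \<in> U" "w \<in> U"
  shows "u \<bullet> w = (if u = w then 1 else 0)"
proof (cases "u = w")
  case True
  then show ?thesis using assms unfolding eigbasis_def by (simp add: dot_square_norm)
next
  case False
  then show ?thesis using assms unfolding eigbasis_def pairwise_def orthogonal_def by auto
qed

lemma eigbasis_expand:
  fixes M :: "real^'n^'n"
  assumes B: "eigbasis M U"
  shows "x = (\<Sum>u\<in>U. (x \<bullet> u) *\<^sub>R u)"
proof -
  have fin: "finite U" using eigbasis_basic[OF B] by simp
  have "x \<in> span U" using B unfolding eigbasis_def by simp
  then obtain c where c: "x = (\<Sum>v\<in>U. c v *\<^sub>R v)" using span_finite[OF fin] by auto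
  have "x \<bullet> w = c w" if w: "w \<in> U" for w
  proof -
    have "x \<bullet> w = (\<Sum>v\<in>U. c v * (v \<bullet> w))" unfolding c by (simp add: inner_sum_left)
    also have "\<dots> = (\<Sum>v\<in>U. if v = w then c v else 0)"
      by (rule sum.cong) (auto simp: eigbasis_orth[OF B _ w])
    also have "\<dots> = c w" using fin w by simp
    finally show ?thesis .
  qed
  hence "(\<Sum>u\<in>U. (x \<bullet> u) *\<^sub>R u) = (\<Sum>v\<in>U. c v *\<^sub>R v)" by simp
  thus ?thesis using c by simp
qed

lemma eigbasis_inner:
  fixes M :: "real^'n^'n"
  assumes B: "eigbasis M U"
  shows "x \<bullet> y = (\<Sum>u\<in>U. (x \<bullet> u) * (y \<bullet> u))"
proof -
  have "x \<bullet> y = x \<bullet> (\<Sum>u\<in>U. (y \<bullet> u) *\<^sub>R u)" using eigbasis_expand[OF B, of y] by simp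
  also have "\<dots> = (\<Sum>u\<in>U. (x \<bullet> u) * (y \<bullet> u))" by (simp add: inner_sum_right mult.commute)
  finally show ?thesis .
qed

lemma eigbasis_norm:
  fixes M :: "real^'n^'n"
  assumes B: "eigbasis M U"
  shows "(norm x)^2 = (\<Sum>u\<in>U. (x \<bullet> u)^2)"
  using eigbasis_inner[OF B, of x x] by (simp add: dot_square_norm power2_eq_square)

lemma eigbasis_quad:
  fixes M :: "real^'n^'n"
  assumes B: "eigbasis M U" and sym: "symmetric_mat M"
  shows "x \<bullet> (M *v x) = (\<Sum>u\<in>U. (u \<bullet> (M *v u)) * (x \<bullet> u)^2)"
proof -
  have "x \<bullet> (M *v x) = (\<Sum>u\<in>U. (x \<bullet> u) * ((M *v x) \<bullet> u))" by (rule eigbasis_inner[OF B])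
  also have "\<dots> = (\<Sum>u\<in>U. (u \<bullet> (M *v u)) * (x \<bullet> u)^2)"
  proof (rule sum.cong)
    fix u assume u: "u \<in> U"
    have "(M *v x) \<bullet> u = x \<bullet> (M *v u)" by (rule sym_inner[OF sym])
    also have "\<dots> = (u \<bullet> (M *v u)) * (x \<bullet> u)" using B u unfolding eigbasis_def
      by (metis inner_scaleR_right)
    finally show "(x \<bullet> u) * ((M *v x) \<bullet> u) = (u \<bullet> (M *v u)) * (x \<bullet> u)^2"
      by (simp add: power2_eq_square)
  qed simp
  finally show ?thesis .
qed

lemma poly_charpoly:
  fixes M :: "real^'n^'n"
  shows "poly (charpoly M) x = det (\<chi> i j. (if i = j then x else 0) - M $ i $ j)"
  unfolding charpoly_def det_def
  apply (simp add: poly_sum poly_prod of_int_poly)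
  apply (intro sum.cong refl arg_cong2[where f="(*)"] prod.cong)
  apply auto
  done

lemma det_eigbasis:
  fixes M :: "real^'n^'n"
  assumes B: "eigbasis M U"
  shows "det (\<chi> i j. (if i = j then x else 0) - M $ i $ j) = (\<Prod>u\<in>U. x - u \<bullet> (M *v u))"
proof -
  define \<mu> where "\<mu> u = u \<bullet> (M *v u)" for u
  have fin: "finite U" and cU: "card U = CARD('n)" using eigbasis_basic[OF B] by auto
  obtain \<sigma> :: "'n \<Rightarrow> real^'n" where \<sigma>: "bij_betw \<sigma> UNIV U"
    using finite_same_card_bij[OF finite fin] cU by auto
  have \<sigma>U: "\<sigma> j \<in> U" for j using \<sigma> by (auto simp: bij_betw_def)
  have \<sigma>inj: "\<sigma> i = \<sigma> j \<longleftrightarrow> i = j" for i j using \<sigma> by (auto simp: bij_betw_def inj_on_def)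
  define Q where "Q = (\<chi> i j. (if i = j then x else 0) - M $ i $ j)"
  define P where "P = (\<chi> i j. (\<sigma> j) $ i)"
  define D :: "real^'n^'n" where "D = (\<chi> i j. if i = j then x - \<mu> (\<sigma> j) else 0)"
  have ev: "M *v \<sigma> j = \<mu> (\<sigma> j) *\<^sub>R \<sigma> j" for j using B \<sigma>U unfolding eigbasis_def \<mu>_def by auto
  have "Q ** P = P ** D"
  proof -
    have "(Q ** P) $ i $ j = (P ** D) $ i $ j" for i j
    proof -
      have "(Q ** P) $ i $ j = (\<Sum>k\<in>UNIV. ((if i = k then x else 0) - M $ i $ k) * (\<sigma> j) $ k)"
        unfolding Q_def P_def matrix_matrix_mult_def by simp
      also have "\<dots> = x * (\<sigma> j) $ i - (M *v \<sigma> j) $ i"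
      proof -
        have "(\<Sum>k\<in>UNIV. ((if i = k then x else 0) - M $ i $ k) * (\<sigma> j) $ k)
          = (\<Sum>k\<in>UNIV. (if i = k then x * (\<sigma> j) $ k else 0)) - (\<Sum>k\<in>UNIV. M $ i $ k * (\<sigma> j) $ k)"
          by (subst sum_subtractf[symmetric]) (rule sum.cong, auto simp: algebra_simps)
        thus ?thesis by (simp add: matrix_vector_mult_def)
      qed
      also have "\<dots> = (\<sigma> j) $ i * (x - \<mu> (\<sigma> j))" using ev[of j] by (simp add: algebra_simps)
      also have "\<dots> = (P ** D) $ i $ j"
        unfolding P_def D_def matrix_matrix_mult_def by (simp add: if_distrib cong: if_cong)
      finally show ?thesis .
    qed
    thus ?thesis by (simp add: vec_eq_iff)
  qed
  hence "det Q * det P = det P * det D" by (metis det_mul)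
  moreover have "det P \<noteq> 0"
  proof -
    have "transpose P ** P = mat 1"
    proof -
      have "(transpose P ** P) $ i $ j = mat 1 $ i $ j" for i j
      proof -
        have "(transpose P ** P) $ i $ j = \<sigma> i \<bullet> \<sigma> j"
          unfolding P_def transpose_def matrix_matrix_mult_def inner_vec_def by simp
        also have "\<dots> = mat 1 $ i $ j" using eigbasis_orth[OF B \<sigma>U \<sigma>U] \<sigma>inj by (simp add: mat_def)
        finally show ?thesis .
      qed
      thus ?thesis by (simp add: vec_eq_iff)
    qed
    hence "det P * det P = 1" by (metis det_I det_mul det_transpose)
    thus ?thesis by auto
  qed
  ultimately have "det Q = det D" by simp
  also have "det D = (\<Prod>j\<in>UNIV. x - \<mu> (\<sigma> j))" unfolding D_def by (subst det_diagonal) auto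
  also have "\<dots> = (\<Prod>u\<in>U. x - \<mu> u)" using prod.reindex_bij_betw[OF \<sigma>, of "\<lambda>u. x - \<mu> u"] by simp
  finally show ?thesis unfolding Q_def \<mu>_def .
qed

lemma charpoly_eigbasis:
  fixes M :: "real^'n^'n"
  assumes B: "eigbasis M U"
  shows "charpoly M = (\<Prod>u\<in>U. [:- (u \<bullet> (M *v u)), 1:])"
proof -
  have "poly (charpoly M) = poly (\<Prod>u\<in>U. [:- (u \<bullet> (M *v u)), 1:])"
    by (rule ext) (simp add: poly_charpoly det_eigbasis[OF B] poly_prod)
  thus ?thesis by (simp add: poly_eq_poly_eq_iff)
qed

lemma order_lin: "order a [:- b, 1:] = (if a = b then 1 else (0::nat))"
proof (cases "a = b")
  case True
  then show ?thesis using order_power_n_n[of b 1] by simp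
next
  case False
  have "poly [:- b, 1:] a \<noteq> 0" using False by simp
  hence "order a [:- b, 1:] = 0" by (rule order_0I)
  then show ?thesis using False by simp
qed

lemma order_prod_lin:
  fixes f :: "'a \<Rightarrow> real"
  assumes "finite U"
  shows "order a (\<Prod>u\<in>U. [:- f u, 1:]) = count (image_mset f (mset_set U)) a"
  using assms
proof (induction U rule: finite_induct)
  case empty
  then show ?case by simp
next
  case (insert x F)
  have nz: "(\<Prod>u\<in>F. [:- f u, 1:]) \<noteq> 0" using insert.hyps(1) by (simp add: prod_zero_iff)
  have "order a (\<Prod>u\<in>insert x F. [:- f u, 1:]) = order a ([:- f x, 1:] * (\<Prod>u\<in>F. [:- f u, 1:]))"
    using insert.hyps by simp
  also have "\<dots> = order a [:- f x, 1:] + order a (\<Prod>u\<in>F. [:- f u, 1:])"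
    using nz by (intro order_mult) (simp only: mult_eq_0_iff pCons_eq_0_iff, simp)
  finally show ?case using insert by (simp add: order_lin)
qed

lemma eigvals_mset_eigbasis:
  fixes M :: "real^'n^'n"
  assumes B: "eigbasis M U"
  shows "eigvals_mset M = image_mset (\<lambda>u. u \<bullet> (M *v u)) (mset_set U)"
proof -
  have fin: "finite U" using eigbasis_basic[OF B] by simp
  have "(\<lambda>a. order a (charpoly M)) = count (image_mset (\<lambda>u. u \<bullet> (M *v u)) (mset_set U))"
    by (rule ext) (simp add: charpoly_eigbasis[OF B] order_prod_lin[OF fin])
  thus ?thesis unfolding eigvals_mset_def by simp
qed

lemma eigvals_eigbasis:
  fixes M :: "real^'n^'n"
  assumes B: "eigbasis M U"
  shows "mset (eigvals M) = image_mset (\<lambda>u. u \<bullet> (M *v u)) (mset_set U)"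
    and "length (eigvals M) = CARD('n)"
    and "set (eigvals M) = (\<lambda>u. u \<bullet> (M *v u)) ` U"
    and "Gfun M = (\<Sum>u\<in>U. arctan (u \<bullet> (M *v u)))"
proof -
  have fin: "finite U" and cU: "card U = CARD('n)" using eigbasis_basic[OF B] by auto
  show m: "mset (eigvals M) = image_mset (\<lambda>u. u \<bullet> (M *v u)) (mset_set U)"
    unfolding eigvals_def eigvals_mset_eigbasis[OF B] by simp
  show l: "length (eigvals M) = CARD('n)"
    using arg_cong[OF m, of size] fin cU by simp
  show "set (eigvals M) = (\<lambda>u. u \<bullet> (M *v u)) ` U"
    using arg_cong[OF m, of set_mset] fin by simp
  have "Gfun M = sum_list (map arctan (eigvals M))"
    unfolding Gfun_def sum_list_sum_nth using l by (simp add: atLeast0LessThan)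
  also have "\<dots> = sum_mset (image_mset arctan (mset (eigvals M)))"
    by (simp add: sum_mset_sum_list[symmetric])
  also have "\<dots> = (\<Sum>u\<in>U. arctan (u \<bullet> (M *v u)))"
    unfolding m by (simp add: sum_unfold_sum_mset image_mset.compositionality o_def)
  finally show "Gfun M = (\<Sum>u\<in>U. arctan (u \<bullet> (M *v u)))" .
qed

definition diagm :: "('n \<Rightarrow> real) \<Rightarrow> real^'n^'n" where
  "diagm a = (\<chi> i j. if i = j then a i else 0)"

lemma diagm_mult: "diagm a *v x = (\<chi> i. a i * x $ i)"
proof -
  have "(\<Sum>j\<in>UNIV. (if i = j then a i else 0) * x $ j) = a i * x $ i" for i
  proof -
    have "(\<Sum>j\<in>UNIV. (if i = j then a i else 0) * x $ j) = (\<Sum>j\<in>UNIV. if i = j then a i * x $ j else 0)"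
      by (rule sum.cong) auto
    thus ?thesis by simp
  qed
  thus ?thesis unfolding diagm_def matrix_vector_mult_def by (simp add: vec_eq_iff)
qed

lemma diagm_sym: "symmetric_mat (diagm a)"
  unfolding symmetric_mat_def diagm_def transpose_def by (simp add: vec_eq_iff)

lemma diagm_quad: "x \<bullet> (diagm a *v x) = (\<Sum>i\<in>UNIV. a i * (x $ i)^2)"
  unfolding diagm_mult inner_vec_def by (simp add: power2_eq_square algebra_simps)

lemma norm_sq_vec: "(norm (x::real^'n))^2 = (\<Sum>i\<in>UNIV. (x $ i)^2)"
  unfolding power2_norm_eq_inner inner_vec_def by (simp add: power2_eq_square)

lemma diagm_eigbasis: "eigbasis (diagm a) (range (\<lambda>i. axis i 1))"
  and diagm_eig: "axis i 1 \<bullet> (diagm a *v axis i 1) = a i"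
proof -
  show e: "axis i 1 \<bullet> (diagm a *v axis i 1) = a i" for i
    unfolding diagm_mult inner_vec_def axis_def by (simp add: if_distrib cong: if_cong)
  have R: "range (\<lambda>i. axis i (1::real)) = (Basis :: (real^'n) set)" by (auto simp: Basis_vec_def)
  have "pairwise orthogonal (Basis :: (real^'n) set)"
    by (simp add: pairwise_def orthogonal_def inner_not_same_Basis)
  hence "pairwise orthogonal (range (\<lambda>i. axis i (1::real)) :: (real^'n) set)" by (simp only: R)
  moreover have "span (range (\<lambda>i. axis i (1::real)) :: (real^'n) set) = UNIV" by (simp only: R span_Basis)
  moreover have "diagm a *v axis i 1 = a i *\<^sub>R axis i 1" for i
    unfolding diagm_mult axis_def by (simp add: vec_eq_iff)
  ultimately show "eigbasis (diagm a) (range (\<lambda>i. axis i 1))"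
    unfolding eigbasis_def using e by auto
qed

lemma Gfun_diagm: "Gfun (diagm a) = (\<Sum>i\<in>UNIV. arctan (a i))"
proof -
  have inj: "inj (\<lambda>i. axis i (1::real) :: real^'n)" by (auto simp: inj_on_def axis_eq_axis)
  have "Gfun (diagm a) = (\<Sum>u\<in>range (\<lambda>i. axis i 1). arctan (u \<bullet> (diagm a *v u)))"
    by (rule eigvals_eigbasis(4)[OF diagm_eigbasis])
  also have "\<dots> = (\<Sum>i\<in>UNIV. arctan (a i))"
    by (subst sum.reindex[OF inj]) (simp add: diagm_eig)
  finally show ?thesis .
qed

lemma sym_diff: "symmetric_mat A \<Longrightarrow> symmetric_mat B \<Longrightarrow> symmetric_mat (A - B)"
  unfolding symmetric_mat_def transpose_def by (simp add: vec_eq_iff)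

lemma key:
  fixes K :: "'n::finite set" and B :: "real^'n^'n" and a :: "'n \<Rightarrow> real"
  assumes s: "s > 0" and t: "t > 0" and cK: "card K = k"
    and a: "a = (\<lambda>i. if i \<in> K then -s else t)"
    and symB: "symmetric_mat B"
    and small: "\<And>i. i < CARD('n) \<Longrightarrow> \<bar>eigvals (diagm a - B) ! i\<bar> < \<epsilon>"
  shows "Gfun B \<le> (real CARD('n) - real k) * arctan (t + \<epsilon>) - real k * arctan (s - \<epsilon>)"
proof -
  define A where "A = diagm a"
  define D where "D = A - B"
  have symD: "symmetric_mat D" unfolding D_def A_def by (intro sym_diff diagm_sym symB)
  obtain UD where UD: "eigbasis D UD" using eigbasis_exists[OF symD] by blast
  have muD: "\<bar>u \<bullet> (D *v u)\<bar> < \<epsilon>" if u: "u \<in> UD" for u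
  proof -
    have "u \<bullet> (D *v u) \<in> set (eigvals D)" using eigvals_eigbasis(3)[OF UD] u by simp
    then obtain i where "i < length (eigvals D)" "eigvals D ! i = u \<bullet> (D *v u)"
      by (auto simp: in_set_conv_nth)
    thus ?thesis using small[of i] eigvals_eigbasis(2)[OF UD] unfolding D_def A_def by simp
  qed
  have quadD: "x \<bullet> (D *v x) \<ge> - \<epsilon> * (norm x)^2" for x
  proof -
    have "- \<epsilon> * (norm x)^2 = (\<Sum>u\<in>UD. - \<epsilon> * (x \<bullet> u)^2)"
      by (simp add: eigbasis_norm[OF UD] sum_distrib_left)
    also have "\<dots> \<le> (\<Sum>u\<in>UD. (u \<bullet> (D *v u)) * (x \<bullet> u)^2)"
    proof (rule sum_mono)
      fix u assume "u \<in> UD"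
      hence "- \<epsilon> \<le> u \<bullet> (D *v u)" using muD by force
      thus "- \<epsilon> * (x \<bullet> u)^2 \<le> (u \<bullet> (D *v u)) * (x \<bullet> u)^2"
        by (intro mult_right_mono) auto
    qed
    also have "\<dots> = x \<bullet> (D *v x)" by (rule eigbasis_quad[OF UD symD, symmetric])
    finally show ?thesis .
  qed
  have quadA: "x \<bullet> (A *v x) = (\<Sum>i\<in>UNIV. a i * (x $ i)^2)" for x
    unfolding A_def by (rule diagm_quad)
  have quadAt: "x \<bullet> (A *v x) \<le> t * (norm x)^2" for x
  proof -
    have "x \<bullet> (A *v x) \<le> (\<Sum>i\<in>UNIV. t * (x $ i)^2)"
      unfolding quadA by (rule sum_mono, rule mult_right_mono) (use s t in \<open>auto simp: a\<close>)
    thus ?thesis by (simp add: norm_sq_vec sum_distrib_left)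
  qed
  have Bsplit: "x \<bullet> (B *v x) = x \<bullet> (A *v x) - x \<bullet> (D *v x)" for x
  proof -
    have "B = A - D" unfolding D_def by simp
    hence "B *v x = A *v x - D *v x" by (simp add: matrix_vector_mult_diff_rdistrib)
    thus ?thesis by (simp add: inner_diff_right)
  qed
  obtain UB where UB: "eigbasis B UB" using eigbasis_exists[OF symB] by blast
  have finB: "finite UB" and cardB: "card UB = CARD('n)" and indB: "independent UB"
    using eigbasis_basic[OF UB] by auto
  define \<mu> where "\<mu> u = u \<bullet> (B *v u)" for u
  have upper: "\<mu> u \<le> t + \<epsilon>" if "u \<in> UB" for u
  proof -
    have nu: "norm u = 1" using UB that unfolding eigbasis_def by auto
    have "\<mu> u = u \<bullet> (A *v u) - u \<bullet> (D *v u)" unfolding \<mu>_def by (rule Bsplit)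
    also have "\<dots> \<le> t + \<epsilon>" using quadAt[of u] quadD[of u] nu by simp
    finally show ?thesis .
  qed
  define L where "L = {u\<in>UB. \<mu> u \<le> \<epsilon> - s}"
  define I where "I = UB - L"
  have LUB: "L \<subseteq> UB" unfolding L_def by auto
  have finL: "finite L" using finB LUB by (rule finite_subset[rotated])
  have cardI: "card I = CARD('n) - card L" unfolding I_def using card_Diff_subset[OF finL LUB] cardB by simp
  have cardL: "k \<le> card L"
  proof (rule ccontr)
    assume "\<not> k \<le> card L"
    hence big: "card I + k > CARD('n)" using cardI cardB card_mono[OF finB LUB] by simp
    have indI: "independent I" using indB unfolding I_def by (rule independent_mono) auto
    define W where "W = span I"
    have dimW: "dim W = card I" unfolding W_def by (rule dim_span_eq_card_independent[OF indI])
    define V where "V = span ((\<lambda>i. axis i (1::real)) ` K)"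
    have injax: "inj (\<lambda>i. axis i (1::real) :: real^'n)" by (auto simp: inj_on_def axis_eq_axis)
    have indV: "independent ((\<lambda>i. axis i (1::real)) ` K :: (real^'n) set)"
      by (rule independent_mono[OF independent_Basis]) (auto simp: Basis_vec_def)
    have dimV: "dim V = k" unfolding V_def using dim_span_eq_card_independent[OF indV]
        card_image[OF inj_on_subset[OF injax]] cK by auto
    have "dim {x + y |x y. x \<in> V \<and> y \<in> W} + dim (V \<inter> W) = dim V + dim W"
      unfolding V_def W_def by (rule dim_sums_Int) auto
    moreover have "dim {x + y |x y. x \<in> V \<and> y \<in> W} \<le> CARD('n)" by (rule dim_subset_UNIV_cart)
    ultimately have "dim (V \<inter> W) \<noteq> 0" using dimV dimW big by linarith
    then obtain x where xV: "x \<in> V" and xW: "x \<in> W" and x0: "x \<noteq> 0"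
      by (auto simp: dim_eq_0)
    have xK: "\<forall>i. i \<notin> K \<longrightarrow> x $ i = 0"
    proof -
      have "subspace (Collect (\<lambda>x::real^'n. \<forall>i. i \<notin> K \<longrightarrow> x $ i = 0))"
        unfolding subspace_def by auto
      moreover have "\<And>y. y \<in> (\<lambda>i. axis i (1::real)) ` K \<Longrightarrow> \<forall>i. i \<notin> K \<longrightarrow> y $ i = 0"
        by (auto simp: axis_def)
      ultimately show ?thesis using span_induct[of x "(\<lambda>i. axis i (1::real)) ` K"] xV
        unfolding V_def by blast
    qed
    have "x \<bullet> (A *v x) = (\<Sum>i\<in>UNIV. (- s) * (x $ i)^2)"
      unfolding quadA by (rule sum.cong) (use xK in \<open>auto simp: a\<close>)
    hence xA: "x \<bullet> (A *v x) = - s * (norm x)^2" by (simp add: norm_sq_vec sum_distrib_left)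
    have le: "x \<bullet> (B *v x) \<le> (\<epsilon> - s) * (norm x)^2"
      using Bsplit[of x] xA quadD[of x] by (simp add: algebra_simps)
    have xL: "x \<bullet> u = 0" if u: "u \<in> L" for u
    proof -
      have "orthogonal u x"
      proof (rule orthogonal_to_span[of x I u])
        show "x \<in> span I" using xW W_def by simp
        fix y assume y: "y \<in> I"
        hence "u \<noteq> y" "u \<in> UB" "y \<in> UB" using u unfolding I_def L_def by auto
        thus "orthogonal u y" using UB unfolding eigbasis_def pairwise_def by auto
      qed
      thus ?thesis by (simp add: orthogonal_def inner_commute)
    qed
    obtain u where u: "u \<in> UB" "x \<bullet> u \<noteq> 0"
    proof (rule ccontr)
      assume "\<not> thesis"
      hence "\<forall>u\<in>UB. x \<bullet> u = 0" using that by blast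
      hence "(norm x)^2 = 0" using eigbasis_norm[OF UB, of x] by simp
      thus False using x0 by simp
    qed
    have uI: "u \<notin> L" using u xL by blast
    have "0 < (\<Sum>v\<in>UB. (\<mu> v - (\<epsilon> - s)) * (x \<bullet> v)^2)"
    proof (rule sum_pos2[OF finB u(1)])
      show "0 < (\<mu> u - (\<epsilon> - s)) * (x \<bullet> u)^2" using uI u unfolding L_def by auto
      fix v assume v: "v \<in> UB"
      show "0 \<le> (\<mu> v - (\<epsilon> - s)) * (x \<bullet> v)^2"
      proof (cases "v \<in> L")
        case True then show ?thesis using xL by simp
      next
        case False then show ?thesis using v unfolding L_def by auto
      qed
    qed
    also have "(\<Sum>v\<in>UB. (\<mu> v - (\<epsilon> - s)) * (x \<bullet> v)^2) = x \<bullet> (B *v x) - (\<epsilon> - s) * (norm x)^2"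
      unfolding eigbasis_quad[OF UB symB, of x] eigbasis_norm[OF UB, of x] \<mu>_def
      by (simp add: algebra_simps sum_subtractf sum_distrib_left sum.distrib)
    finally show False using le by simp
  qed
  have "Gfun B = (\<Sum>u\<in>UB. arctan (\<mu> u))" unfolding \<mu>_def by (rule eigvals_eigbasis(4)[OF UB])
  also have "\<dots> = (\<Sum>u\<in>L. arctan (\<mu> u)) + (\<Sum>u\<in>I. arctan (\<mu> u))"
    unfolding I_def using sum.subset_diff[OF LUB finB, of "\<lambda>u. arctan (\<mu> u)"] by simp
  also have "\<dots> \<le> real (card L) * arctan (\<epsilon> - s) + real (card I) * arctan (t + \<epsilon>)"
  proof (rule add_mono)
    show "(\<Sum>u\<in>L. arctan (\<mu> u)) \<le> real (card L) * arctan (\<epsilon> - s)"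
      by (rule sum_bounded_above) (auto simp: L_def arctan_le_iff)
    show "(\<Sum>u\<in>I. arctan (\<mu> u)) \<le> real (card I) * arctan (t + \<epsilon>)"
      by (rule sum_bounded_above) (use upper in \<open>auto simp: I_def arctan_le_iff\<close>)
  qed
  also have "\<dots> \<le> (real CARD('n) - real k) * arctan (t + \<epsilon>) - real k * arctan (s - \<epsilon>)"
  proof -
    have LN: "card L \<le> CARD('n)" using card_mono[OF finB LUB] cardB by simp
    have ab: "arctan (\<epsilon> - s) \<le> arctan (t + \<epsilon>)" using s t by (simp add: arctan_le_iff)
    have "(real (card L) - real k) * (arctan (\<epsilon> - s) - arctan (t + \<epsilon>)) \<le> 0"
      using cardL ab by (intro mult_nonneg_nonpos) auto
    moreover have e: "real CARD('n) = real (card I) + real (card L)" using cardI LN by simp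
    moreover have "arctan (\<epsilon> - s) = - arctan (s - \<epsilon>)" by (simp add: arctan_minus[symmetric])
    ultimately show ?thesis unfolding e by (simp add: algebra_simps)
  qed
  finally show ?thesis .
qed

lemma Gfun_diagK:
  fixes K :: "'n::finite set"
  assumes "card K = k"
  shows "Gfun (diagm (\<lambda>i. if i \<in> K then -s else t)) = (real CARD('n) - real k) * arctan t - real k * arctan s"
proof -
  have "Gfun (diagm (\<lambda>i. if i \<in> K then -s else t)) = (\<Sum>i\<in>UNIV. if i \<in> K then - arctan s else arctan t)"
    unfolding Gfun_diagm by (rule sum.cong) (auto simp: arctan_minus)
  also have "\<dots> = real (card K) * (- arctan s) + real (card (- K)) * arctan t"
    by (simp add: sum.If_cases Compl_eq_Diff_UNIV)
  also have "card (- K) = CARD('n) - card K" by (simp add: Compl_eq_Diff_UNIV card_Diff_subset)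
  finally show ?thesis using assms card_mono[of UNIV K] by (simp add: algebra_simps of_nat_diff)
qed

lemma pnorm_small:
  fixes A B :: "real^'n^'n"
  assumes "pnorm ((r0, A) - (r, B)) < \<epsilon>" "i < CARD('n)"
  shows "\<bar>eigvals (A - B) ! i\<bar> < \<epsilon>"
proof -
  have fin: "finite {\<bar>eigvals (A - B) ! i\<bar> | i. i < CARD('n)}" by (rule finite_image_set) simp
  have "\<bar>eigvals (A - B) ! i\<bar> \<le> Max {\<bar>eigvals (A - B) ! i\<bar> | i. i < CARD('n)}"
    by (rule Max_ge[OF fin]) (use assms(2) in blast)
  also have "\<dots> \<le> pnorm ((r0, A) - (r, B))" unfolding pnorm_def by simp
  finally show ?thesis using assms(1) by simp
qed

lemma not_near:
  fixes A :: "real^'n^'n"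
  assumes "\<And>B. symmetric_mat B \<Longrightarrow> (\<And>i. i < CARD('n) \<Longrightarrow> \<bar>eigvals (A - B) ! i\<bar> < \<epsilon>) \<Longrightarrow> Gfun B < h y"
  shows "(0, A) \<notin> nbhd \<epsilon> (Theta h y)"
proof
  assume "(0, A) \<in> nbhd \<epsilon> (Theta h y)"
  then obtain r B where B: "symmetric_mat B" "Gfun B \<ge> h y" and p: "pnorm ((0, A) - (r, B)) < \<epsilon>"
    unfolding nbhd_def Theta_def by auto
  have "Gfun B < h y" using assms[OF B(1)] pnorm_small[OF p] by blast
  thus False using B(2) by simp
qed

lemma arctan_big: "d > 0 \<Longrightarrow> \<exists>y0. \<forall>y\<ge>y0. arctan y > pi/2 - d"
proof -
  assume d: "d > 0"
  have "eventually (\<lambda>y. arctan y > pi/2 - d) at_top"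
    using order_tendstoD(1)[OF tendsto_arctan_at_top, of "pi/2 - d"] d by simp
  thus ?thesis by (simp add: eventually_at_top_linorder)
qed

lemma mul_sub_div: "(n::real) \<noteq> 0 \<Longrightarrow> n * (p - x / n) = n * p - x"
  by (simp add: right_diff_distrib)

theorem proposition6p17:
  fixes \<Omega> :: "(real^'n) set" and h :: "real^'n \<Rightarrow> real"
    and k :: nat and xs :: "nat \<Rightarrow> real^'n" and x0 :: "real^'n"
  assumes "bounded \<Omega>" and "open \<Omega>" and "connected \<Omega>"
    and "continuous_on \<Omega> h"
    and "1 \<le> k" and "k \<le> CARD('n) - 1"
    and "\<And>n. xs n \<in> \<Omega>" and "xs \<longlonglongrightarrow> x0" and "x0 \<in> \<Omega>"
    and "h x0 = (real CARD('n) - 2 * real k) * pi / 2"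
    and "(\<forall>n. h (xs n) > (real CARD('n) - 2 * real k) * pi / 2) \<or>
         (\<forall>n. h (xs n) < (real CARD('n) - 2 * real k) * pi / 2)"
  shows "\<not> hausdorff_continuous_on \<Omega> (Theta h :: real^'n \<Rightarrow> (real \<times> (real^'n^'n)) set)"
proof -
  define \<theta> where "\<theta> = (real CARD('n) - 2 * real k) * pi / 2"
  define Nk where "Nk = real CARD('n) - real k"
  have k1: "real k \<ge> 1" using assms(5) by simp
  have Nk1: "Nk \<ge> 1" unfolding Nk_def using assms(5,6) by linarith
  have \<theta>: "\<theta> = Nk * (pi/2) - real k * (pi/2)" unfolding \<theta>_def Nk_def by (simp add: field_simps)
  obtain K :: "'n set" where cK: "card K = k"
  proof -
    have "k \<le> card (UNIV :: 'n set)" using assms(6) by simp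
    thus ?thesis using obtain_subset_with_card_n[of k "UNIV :: 'n set"] that by blast
  qed
  have far: "\<not> (Theta h x0 \<subseteq> nbhd \<epsilon> (Theta h (xs n)) \<and> Theta h (xs n) \<subseteq> nbhd \<epsilon> (Theta h x0))"
    if \<epsilon>: "\<epsilon> > 0" for \<epsilon> n
  proof -
    define c where "c = h (xs n)"
    from assms(11) have "c > \<theta> \<or> c < \<theta>" unfolding c_def \<theta>_def by blast
    thus ?thesis
    proof
      assume c: "c > \<theta>"
      obtain y0 where y0: "\<And>y. y \<ge> y0 \<Longrightarrow> arctan y > pi/2 - (c - \<theta>) / real k"
        using arctan_big[of "(c - \<theta>) / real k"] c k1 by auto
      define s where "s = \<bar>y0\<bar> + \<epsilon>"
      have s: "s > 0" "s - \<epsilon> \<ge> y0" unfolding s_def using \<epsilon> by auto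
      have as: "arctan s < pi/2" by (rule arctan_ubound)
      have "real k * (pi/2 - arctan s) / Nk > 0" using as k1 Nk1 by simp
      from arctan_big[OF this] obtain y1 where
        y1: "\<And>y. y \<ge> y1 \<Longrightarrow> arctan y > pi/2 - real k * (pi/2 - arctan s) / Nk" by auto
      define t where "t = \<bar>y1\<bar> + 1"
      have t: "t > 0" "t \<ge> y1" unfolding t_def by auto
      define a where "a = (\<lambda>i. if i \<in> K then -s else t)"
      have GA: "Gfun (diagm a) = Nk * arctan t - real k * arctan s"
        unfolding a_def Nk_def by (rule Gfun_diagK[OF cK])
      have "Nk * arctan t \<ge> Nk * (pi/2) - real k * (pi/2 - arctan s)"
      proof -
        have "Nk * arctan t \<ge> Nk * (pi/2 - real k * (pi/2 - arctan s) / Nk)"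
          using y1[OF t(2)] Nk1 by (intro mult_left_mono) auto
        moreover have "Nk * (pi/2 - real k * (pi/2 - arctan s) / Nk) = Nk * (pi/2) - real k * (pi/2 - arctan s)"
          using Nk1 by (intro mul_sub_div) auto
        ultimately show ?thesis by linarith
      qed
      hence "Gfun (diagm a) \<ge> h x0" using GA assms(10) \<theta> unfolding \<theta>_def[symmetric]
        by (simp add: algebra_simps)
      hence inA: "(0, diagm a) \<in> Theta h x0" unfolding Theta_def by (simp add: diagm_sym)
      have "(0, diagm a) \<notin> nbhd \<epsilon> (Theta h (xs n))"
      proof (rule not_near)
        fix B :: "real^'n^'n"
        assume B: "symmetric_mat B" and sm: "\<And>i. i < CARD('n) \<Longrightarrow> \<bar>eigvals (diagm a - B) ! i\<bar> < \<epsilon>"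
        have "Gfun B \<le> Nk * arctan (t + \<epsilon>) - real k * arctan (s - \<epsilon>)"
          unfolding Nk_def by (rule key[OF s(1) t(1) cK a_def B sm])
        also have "\<dots> < Nk * (pi/2) - real k * (pi/2 - (c - \<theta>) / real k)"
        proof -
          have "Nk * arctan (t + \<epsilon>) < Nk * (pi/2)" using Nk1 arctan_ubound[of "t+\<epsilon>"] by simp
          moreover have "real k * arctan (s - \<epsilon>) \<ge> real k * (pi/2 - (c - \<theta>) / real k)"
            using y0[OF s(2)] k1 by (intro mult_left_mono) auto
          ultimately show ?thesis by linarith
        qed
        also have "\<dots> = c"
        proof -
          have "real k * (pi/2 - (c - \<theta>) / real k) = real k * (pi/2) - (c - \<theta>)"
            using k1 by (intro mul_sub_div) auto
          thus ?thesis using \<theta> by linarith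
        qed
        finally show "Gfun B < h (xs n)" unfolding c_def .
      qed
      thus ?thesis using inA by blast
    next
      assume c: "c < \<theta>"
      obtain y1 where y1: "\<And>y. y \<ge> y1 \<Longrightarrow> arctan y > pi/2 - (\<theta> - c) / Nk"
        using arctan_big[of "(\<theta> - c) / Nk"] c Nk1 by auto
      define t where "t = \<bar>y1\<bar> + 1"
      have t: "t > 0" "t \<ge> y1" unfolding t_def by auto
      have at: "arctan (t + \<epsilon>) < pi/2" by (rule arctan_ubound)
      have "Nk * (pi/2 - arctan (t + \<epsilon>)) / real k > 0" using at k1 Nk1 by simp
      from arctan_big[OF this] obtain y0 where
        y0: "\<And>y. y \<ge> y0 \<Longrightarrow> arctan y > pi/2 - Nk * (pi/2 - arctan (t + \<epsilon>)) / real k" by auto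
      define s where "s = \<bar>y0\<bar> + \<epsilon>"
      have s: "s > 0" "s - \<epsilon> \<ge> y0" unfolding s_def using \<epsilon> by auto
      define a where "a = (\<lambda>i. if i \<in> K then -s else t)"
      have GA: "Gfun (diagm a) = Nk * arctan t - real k * arctan s"
        unfolding a_def Nk_def by (rule Gfun_diagK[OF cK])
      have "Nk * arctan t \<ge> Nk * (pi/2 - (\<theta> - c) / Nk)"
        using y1[OF t(2)] Nk1 by (intro mult_left_mono) auto
      moreover have "Nk * (pi/2 - (\<theta> - c) / Nk) = Nk * (pi/2) - (\<theta> - c)"
        using Nk1 by (intro mul_sub_div) auto
      ultimately have "Nk * arctan t \<ge> Nk * (pi/2) - (\<theta> - c)" by linarith
      moreover have "real k * arctan s \<le> real k * (pi/2)"
        using arctan_ubound[of s] k1 by (intro mult_left_mono) auto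
      ultimately have "Gfun (diagm a) \<ge> h (xs n)" using GA \<theta> unfolding c_def by linarith
      hence inA: "(0, diagm a) \<in> Theta h (xs n)" unfolding Theta_def by (simp add: diagm_sym)
      have "(0, diagm a) \<notin> nbhd \<epsilon> (Theta h x0)"
      proof (rule not_near)
        fix B :: "real^'n^'n"
        assume B: "symmetric_mat B" and sm: "\<And>i. i < CARD('n) \<Longrightarrow> \<bar>eigvals (diagm a - B) ! i\<bar> < \<epsilon>"
        have "Gfun B \<le> Nk * arctan (t + \<epsilon>) - real k * arctan (s - \<epsilon>)"
          unfolding Nk_def by (rule key[OF s(1) t(1) cK a_def B sm])
        also have "\<dots> < Nk * arctan (t + \<epsilon>) - real k * (pi/2 - Nk * (pi/2 - arctan (t + \<epsilon>)) / real k)"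
        proof -
          have "real k * arctan (s - \<epsilon>) > real k * (pi/2 - Nk * (pi/2 - arctan (t + \<epsilon>)) / real k)"
            using y0[OF s(2)] k1 by (intro mult_strict_left_mono) auto
          thus ?thesis by linarith
        qed
        also have "\<dots> = \<theta>"
        proof -
          have "real k * (pi/2 - Nk * (pi/2 - arctan (t + \<epsilon>)) / real k) = real k * (pi/2) - Nk * (pi/2 - arctan (t + \<epsilon>))"
            using k1 by (intro mul_sub_div) auto
          moreover have "Nk * (pi/2 - arctan (t + \<epsilon>)) = Nk * (pi/2) - Nk * arctan (t + \<epsilon>)"
            by (simp add: right_diff_distrib)
          ultimately show ?thesis using \<theta> by linarith
        qed
        finally show "Gfun B < h x0" using assms(10) unfolding \<theta>_def by simp
      qed
      thus ?thesis using inA by blast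
    qed
  qed
  have hinf: "hdist (Theta h x0) (Theta h (xs n)) = \<infinity>" for n
  proof -
    have "{ereal \<epsilon> | \<epsilon>. \<epsilon> > 0 \<and> Theta h x0 \<subseteq> nbhd \<epsilon> (Theta h (xs n)) \<and> Theta h (xs n) \<subseteq> nbhd \<epsilon> (Theta h x0)} = {}"
      (is "?E = {}") using far by blast
    have "hdist (Theta h x0) (Theta h (xs n)) = Inf ?E" unfolding hdist_def ..
    also have "\<dots> = \<infinity>" unfolding \<open>?E = {}\<close> by (simp add: top_ereal_def)
    finally show ?thesis .
  qed
  show ?thesis
  proof
    assume "hausdorff_continuous_on \<Omega> (Theta h :: real^'n \<Rightarrow> (real \<times> (real^'n^'n)) set)"
    then obtain \<delta> where \<delta>: "\<delta> > 0" and
      H: "\<And>y. y \<in> \<Omega> \<Longrightarrow> norm (x0 - y) < \<delta> \<Longrightarrow> hdist (Theta h x0) (Theta h y) < ereal 1"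
      unfolding hausdorff_continuous_on_def using assms(9) by (meson zero_less_one)
    have "eventually (\<lambda>n. dist (xs n) x0 < \<delta>) sequentially"
      using assms(8) \<delta> by (rule tendstoD)
    then obtain n where "dist (xs n) x0 < \<delta>" by (meson eventually_sequentially order_refl)
    hence "norm (x0 - xs n) < \<delta>" by (simp add: dist_norm norm_minus_commute)
    from H[OF assms(7) this] hinf[of n] show False by simp
  qed
qed

end
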